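(* There is no correct translation from SYNCSIMPLE into $\mathrm{LOCKSIMPLE}_{1,IS}$, for either initial store $IS = (\Box)$ or $IS = (\blacksquare)$.
   Context: SYNCSIMPLE: subprocesses $\mathcal{U} ::= \checkmark \mid 0 \mid\ !\mathcal{U} \mid\ ?\mathcal{U}$; processes are finite parallel compositions $\mathcal{U}_1 \mid \cdots \mid \mathcal{U}_n$ (parallel composition is associative, commutative, with $0$ as identity). The only reduction is $!\mathcal{U}_1 \mid ?\mathcal{U}_2 \mid \mathcal{P} \to \mathcal{U}_1 \mid \mathcal{U}_2 \mid \mathcal{P}$. A process is successful if it has the form $\checkmark \mid \mathcal{P}$. $\mathrm{LOCKSIMPLE}_{k,IS}$ (here $k=1$): subprocesses $\mathcal{U} ::= 0 \mid \checkmark \mid P_i\mathcal{U} \mid T_i\mathcal{U}$ ($1\le i\le k$), processes are parallel compositions of subprocesses. Execution acts on states $(\mathcal{P},\mathcal{C})$ with locks $C_i\in\{\Box \text{ (empty)},\blacksquare \text{ (full)}\}$, starting from the initial store $IS$. Rules: $(P_i\mathcal{U}\mid\mathcal{P},\mathcal{C}[C_i=\Box]) \to (\mathcal{U}\mid\mathcal{P},\mathcal{C}[C_i\mapsto\blacksquare])$ (so $P_i$ blocks on a full lock), and $(T_i\mathcal{U}\mid\mathcal{P},\mathcal{C}) \to (\mathcal{U}\mid\mathcal{P},\mathcal{C}[C_i\mapsto\Box])$ (take never blocks). A state is successful if its process contains a top-level $\checkmark$. In both calculi, a process (state) is may-convergent if some reduction sequence reaches a successful process (state), and must-convergent if every process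 (state) reachable from it is may-convergent. A translation is a mapping $\tau$ from SYNCSIMPLE-processes to $\mathrm{LOCKSIMPLE}_{k,IS}$-processes; it is compositional if $\tau(0)=0$, $\tau(\checkmark)=\checkmark$, $\tau(\mathcal{P}_1\mid\mathcal{P}_2)=\tau(\mathcal{P}_1)\mid\tau(\mathcal{P}_2)$, $\tau(\mathcal{U})$ contains no parallel operator, and $\tau(!\mathcal{U})=\tau(!)\tau(\mathcal{U})$, $\tau(?\mathcal{U})=\tau(?)\tau(\mathcal{U})$. It is correct if for every SYNCSIMPLE-process $P$: $P$ is may-convergent iff $\tau(P)$ is, and $P$ is must-convergent iff $\tau(P)$ is. The translations considered in this result are compositional. *)

theory Defs
  imports Main "HOL-Library.Multiset"
begin

datatype ssub = SOk | SZero | SSend ssub | SRecv ssub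

type_synonym sproc = "ssub multiset"

definition sstep :: "sproc \<Rightarrow> sproc \<Rightarrow> bool" where
  "sstep P P' \<longleftrightarrow> (\<exists>U1 U2 R. P = {#SSend U1, SRecv U2#} + R \<and> P' = {#U1, U2#} + R)"

definition ssuccessful :: "sproc \<Rightarrow> bool" where
  "ssuccessful P \<longleftrightarrow> SOk \<in># P"

definition smay :: "sproc \<Rightarrow> bool" where
  "smay P \<longleftrightarrow> (\<exists>P'. sstep\<^sup>*\<^sup>* P P' \<and> ssuccessful P')"

definition smust :: "sproc \<Rightarrow> bool" where
  "smust P \<longleftrightarrow> (\<forall>P'. sstep\<^sup>*\<^sup>* P P' \<longrightarrow> smay P')"

datatype lsub = LOk | LZero | LPut lsub | LTake lsub

datatype lockval = Empty | Full

type_synonym lstate = "lsub multiset \<times> lockval"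

inductive lstep :: "lstate \<Rightarrow> lstate \<Rightarrow> bool" where
  put: "lstep ({#LPut U#} + R, Empty) ({#U#} + R, Full)"
| take: "lstep ({#LTake U#} + R, C) ({#U#} + R, Empty)"

definition lsuccessful :: "lstate \<Rightarrow> bool" where
  "lsuccessful S \<longleftrightarrow> LOk \<in># fst S"

definition lmay :: "lstate \<Rightarrow> bool" where
  "lmay S \<longleftrightarrow> (\<exists>S'. lstep\<^sup>*\<^sup>* S S' \<and> lsuccessful S')"

definition lmust :: "lstate \<Rightarrow> bool" where
  "lmust S \<longleftrightarrow> (\<forall>S'. lstep\<^sup>*\<^sup>* S S' \<longrightarrow> lmay S')"

text \<open>A compositional translation is determined by the images of the two prefixes
  ! and ?, each a (possibly empty) sequence of lock actions P_1 / T_1.\<close>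

datatype act = AP | AT

fun prefix :: "act list \<Rightarrow> lsub \<Rightarrow> lsub" where
  "prefix [] u = u"
| "prefix (AP # as) u = LPut (prefix as u)"
| "prefix (AT # as) u = LTake (prefix as u)"

fun trsub :: "act list \<Rightarrow> act list \<Rightarrow> ssub \<Rightarrow> lsub" where
  "trsub ws wr SOk = LOk"
| "trsub ws wr SZero = LZero"
| "trsub ws wr (SSend U) = prefix ws (trsub ws wr U)"
| "trsub ws wr (SRecv U) = prefix wr (trsub ws wr U)"

definition trproc :: "act list \<Rightarrow> act list \<Rightarrow> sproc \<Rightarrow> lsub multiset" where
  "trproc ws wr P = image_mset (trsub ws wr) P"

definition correct_translation :: "lockval \<Rightarrow> act list \<Rightarrow> act list \<Rightarrow> bool" where
  "correct_translation IS ws wr \<longleftrightarrow>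
     (\<forall>P. (smay P \<longleftrightarrow> lmay (trproc ws wr P, IS)) \<and>
          (smust P \<longleftrightarrow> lmust (trproc ws wr P, IS)))"

end

theory Submission
  imports Defs
begin

fun blocks :: "act list \<Rightarrow> lockval \<Rightarrow> bool" where
  "blocks [] c = False"
| "blocks (AP # w) Empty = blocks w Full"
| "blocks (AP # w) Full = True"
| "blocks (AT # w) c = blocks w Empty"

lemma run_ok:
  "\<not> blocks w c \<Longrightarrow> \<exists>c'. lstep\<^sup>*\<^sup>* ({#prefix w u#} + R, c) ({#u#} + R, c')"
proof (induction w c rule: blocks.induct)
  case (2 w)
  then obtain c' where "lstep\<^sup>*\<^sup>* ({#prefix w u#} + R, Full) ({#u#} + R, c')" by auto
  moreover have "lstep ({#prefix (AP # w) u#} + R, Empty) ({#prefix w u#} + R, Full)"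
    using lstep.put[of "prefix w u" R] by simp
  ultimately show ?case by (meson converse_rtranclp_into_rtranclp)
next
  case (4 w c)
  then obtain c' where "lstep\<^sup>*\<^sup>* ({#prefix w u#} + R, Empty) ({#u#} + R, c')" by auto
  moreover have "lstep ({#prefix (AT # w) u#} + R, c) ({#prefix w u#} + R, Empty)"
    using lstep.take[of "prefix w u" R c] by simp
  ultimately show ?case by (meson converse_rtranclp_into_rtranclp)
qed auto

lemma run_block:
  "blocks w c \<Longrightarrow> \<exists>w'. lstep\<^sup>*\<^sup>* ({#prefix w u#} + R, c) ({#prefix (AP # w') u#} + R, Full)"
proof (induction w c rule: blocks.induct)
  case (2 w)
  then obtain w' where "lstep\<^sup>*\<^sup>* ({#prefix w u#} + R, Full) ({#prefix (AP # w') u#} + R, Full)" by auto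
  moreover have "lstep ({#prefix (AP # w) u#} + R, Empty) ({#prefix w u#} + R, Full)"
    using lstep.put[of "prefix w u" R] by simp
  ultimately show ?case by (meson converse_rtranclp_into_rtranclp)
next
  case (3 w)
  show ?case by blast
next
  case (4 w c)
  then obtain w' where "lstep\<^sup>*\<^sup>* ({#prefix w u#} + R, Empty) ({#prefix (AP # w') u#} + R, Full)" by auto
  moreover have "lstep ({#prefix (AT # w) u#} + R, c) ({#prefix w u#} + R, Empty)"
    using lstep.take[of "prefix w u" R c] by simp
  ultimately show ?case by (meson converse_rtranclp_into_rtranclp)
qed auto

lemma blocks_full: "blocks w c \<Longrightarrow> blocks w Full"
  by (induction w c rule: blocks.induct) auto

lemma stuck_state: "\<not> lstep ({#LPut a, LPut b#}, Full) S"
proof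
  assume "lstep ({#LPut a, LPut b#}, Full) S"
  then show False
  proof cases
    case (take U R)
    have "LTake U \<in># {#LTake U#} + R" by simp
    then have "LTake U \<in># {#LPut a, LPut b#}" using take(1) by simp
    then show False by auto
  qed
qed

lemma stuck_not_may: "\<not> lmay ({#LPut a, LPut b#}, Full)"
proof
  assume "lmay ({#LPut a, LPut b#}, Full)"
  then obtain S' where "lstep\<^sup>*\<^sup>* ({#LPut a, LPut b#}, Full) S'" "lsuccessful S'"
    unfolding lmay_def by auto
  then have "S' = ({#LPut a, LPut b#}, Full)"
    using stuck_state by (metis converse_rtranclpE)
  with \<open>lsuccessful S'\<close> show False by (simp add: lsuccessful_def)
qed

lemma single_not_may: "U \<noteq> SOk \<Longrightarrow> \<not> smay {#U#}"
proof
  assume "U \<noteq> SOk" "smay {#U#}"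
  then obtain P' where "sstep\<^sup>*\<^sup>* {#U#} P'" "ssuccessful P'"
    unfolding smay_def by auto
  have "\<not> sstep {#U#} Q" for Q
    unfolding sstep_def by (auto dest: arg_cong[where f=size])
  then have "P' = {#U#}" using \<open>sstep\<^sup>*\<^sup>* {#U#} P'\<close> by (metis converse_rtranclpE)
  then show False using \<open>ssuccessful P'\<close> \<open>U \<noteq> SOk\<close> by (simp add: ssuccessful_def)
qed

lemma pair_inv:
  assumes "sstep\<^sup>*\<^sup>* {#SSend SOk, SRecv SOk#} P'"
  shows "SOk \<in># P' \<or> P' = {#SSend SOk, SRecv SOk#}"
  using assms
proof induction
  case base then show ?case by simp
next
  case (step Q Q')
  from step.hyps(2) obtain U1 U2 R where Q: "Q = {#SSend U1, SRecv U2#} + R"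
    and Q': "Q' = {#U1, U2#} + R" unfolding sstep_def by blast
  from step.IH show ?case
  proof
    assume "SOk \<in># Q" then have "SOk \<in># R" using Q by auto
    then show ?case using Q' by auto
  next
    assume QQ: "Q = {#SSend SOk, SRecv SOk#}"
    with Q have "R = {#}" by (auto dest: arg_cong[where f=size])
    with Q QQ have "U1 = SOk" by (auto simp: add_eq_conv_ex)
    then show ?case using Q' by auto
  qed
qed

lemma pair_must: "smust {#SSend SOk, SRecv SOk#}"
  unfolding smust_def
proof (intro allI impI)
  fix P' assume "sstep\<^sup>*\<^sup>* {#SSend SOk, SRecv SOk#} P'"
  then consider "SOk \<in># P'" | "P' = {#SSend SOk, SRecv SOk#}" using pair_inv by blast
  then show "smay P'"
  proof cases
    case 1 then show ?thesis unfolding smay_def ssuccessful_def by (meson rtranclp.rtrancl_refl)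
  next
    case 2
    have "sstep P' {#SOk, SOk#}" unfolding sstep_def 2
      by (rule exI[of _ SOk], rule exI[of _ SOk], rule exI[of _ "{#}"]) simp
    then have "sstep\<^sup>*\<^sup>* P' {#SOk, SOk#}" by blast
    moreover have "SOk \<in># {#SOk, SOk#}" by simp
    ultimately show ?thesis unfolding smay_def ssuccessful_def by blast
  qed
qed

theorem theorem3p2:
  fixes IS :: lockval
  shows "\<not> (\<exists>ws wr. correct_translation IS ws wr)"
proof
  assume "\<exists>ws wr. correct_translation IS ws wr"
  then obtain ws wr where ct: "correct_translation IS ws wr" by blast
  have bs: "blocks ws IS"
  proof (rule ccontr)
    assume "\<not> blocks ws IS"
    then obtain c' where "lstep\<^sup>*\<^sup>* ({#prefix ws LOk#} + {#}, IS) ({#LOk#} + {#}, c')"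
      using run_ok by blast
    then have "lmay (trproc ws wr {#SSend SOk#}, IS)"
      unfolding lmay_def lsuccessful_def trproc_def by fastforce
    with ct single_not_may[of "SSend SOk"] show False
      unfolding correct_translation_def by blast
  qed
  have br: "blocks wr IS"
  proof (rule ccontr)
    assume "\<not> blocks wr IS"
    then obtain c' where "lstep\<^sup>*\<^sup>* ({#prefix wr LOk#} + {#}, IS) ({#LOk#} + {#}, c')"
      using run_ok by blast
    then have "lmay (trproc ws wr {#SRecv SOk#}, IS)"
      unfolding lmay_def lsuccessful_def trproc_def by fastforce
    with ct single_not_may[of "SRecv SOk"] show False
      unfolding correct_translation_def by blast
  qed
  obtain a where r1: "lstep\<^sup>*\<^sup>* ({#prefix ws LOk#} + {#prefix wr LOk#}, IS)
      ({#prefix (AP # a) LOk#} + {#prefix wr LOk#}, Full)"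
    using run_block[OF bs] by blast
  obtain b where r2: "lstep\<^sup>*\<^sup>* ({#prefix wr LOk#} + {#prefix (AP # a) LOk#}, Full)
      ({#prefix (AP # b) LOk#} + {#prefix (AP # a) LOk#}, Full)"
    using run_block[OF blocks_full[OF br]] by blast
  have "lstep\<^sup>*\<^sup>* (trproc ws wr {#SSend SOk, SRecv SOk#}, IS)
      ({#LPut (prefix b LOk), LPut (prefix a LOk)#}, Full)"
    using rtranclp_trans[OF r1 r2[unfolded add.commute[of "{#prefix wr LOk#}"]]]
    by (simp add: trproc_def add_mset_commute)
  then have "\<not> lmust (trproc ws wr {#SSend SOk, SRecv SOk#}, IS)"
    unfolding lmust_def using stuck_not_may by blast
  with ct pair_must show False unfolding correct_translation_def by blast
qed

end
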